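(* Let the language $\mathcal{L}(\Rightarrow)$, Yalcin's semantics, validity, informational consequence and the Yalcin logic be as described in the context. Then the set of formulas of $\mathcal{L}(\Rightarrow)$ that are valid according to Yalcin's semantics is exactly the Yalcin logic. Moreover, for all formulas $\sigma_1,\dots,\sigma_n,\varphi$ of $\mathcal{L}(\Rightarrow)$, $\varphi$ is an informational consequence of $\{\sigma_1,\dots,\sigma_n\}$ if and only if $(\Box\sigma_1\wedge\dots\wedge\Box\sigma_n)\to\Box\varphi$ is a theorem of the Yalcin logic.
   Context: The language $\mathcal{L}(\Rightarrow)$ is given by $\varphi::= p\mid \neg\varphi\mid (\varphi\wedge\varphi)\mid \Box\varphi \mid (\varphi\Rightarrow\varphi)$, where $p$ ranges over a fixed set of propositional variables; $\vee,\to,\leftrightarrow,\bot$ are defined as usual and $\Diamond\varphi:=\neg\Box\neg\varphi$. $\mathcal{L}$ is the set of formulas not containing $\Rightarrow$; a formula is nonmodal if it is in $\mathcal{L}$ and contains no $\Box$. A model is $\mathcal{M}=\langle W,V\rangle$ with $W$ a nonempty set and $V$ assigning to each propositional variable a subset of $W$. Yalcin's semantics evaluates formulas at $\mathcal{M},w,X$ with $w\in W$ and $X\subseteq W$ (an information state): $\mathcal{M},w,X\vDash p$ iff $w\in V(p)$; negation and conjunction are Boolean; $\mathcal{M},w,X\vDash\Box\varphi$ iff $\mathcal{M},v,X\vDash\varphi$ for all $v\in X$; $\mathcal{M},w,X\vDash\varphi\Rightarrow\psi$ iff $\mathcal{M},w,\llbracket\varphi\rrbracket^{\mathcal{M},X}\vDash\Box\psi$,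 where $\llbracket\varphi\rrbracket^{\mathcal{M},X}=\{v\in X\mid \mathcal{M},v,X\vDash\varphi\}$. A formula is valid iff it is true at every $w$ relative to every $X\subseteq W$ in every model. $\mathcal{M},X\vDash\varphi$ means $\mathcal{M},w,X\vDash\varphi$ for all $w\in X$; $\varphi$ is an informational consequence of a set $\Sigma$ iff for every model $\mathcal{M}$ and every $X\subseteq W$, if $\mathcal{M},X\vDash\sigma$ for all $\sigma\in\Sigma$ then $\mathcal{M},X\vDash\varphi$. The Yalcin logic is the smallest set of $\mathcal{L}(\Rightarrow)$ formulas closed under replacement of equivalents (if $\alpha\leftrightarrow\beta$ is in the set and $\varphi'$ results from $\varphi$ by replacing an occurrence of $\alpha$ by $\beta$, then $\varphi\leftrightarrow\varphi'$ is in the set), modus ponens for $\to$, and necessitation for $\Box$ (from $\varphi$ infer $\Box\varphi$), and containing all substitution instances of propositional tautologies and all instances of: K: $\Box(\varphi\to\psi)\to(\Box\varphi\to\Box\psi)$; 4: $\Diamond\Diamond\varphi\to\Diamond\varphi$; 5: $\Diamond\Box\varphi\to\Box\varphi$; I1: $(\varphi\Rightarrow\pi)\leftrightarrow\Box(\varphi\to\pi)$ for $\pi$ nonmodal; I2: $(\varphi\Rightarrow(\alpha\wedge\beta))\leftrightarrow((\varphi\Rightarrow\alpha)\wedge(\varphi\Rightarrow\beta))$; I3: $(\varphi\Rightarrow\alpha)\to(\varphi\Rightarrow(\alpha\vee\beta))$; I4: $(\varphi\Rightarrow\alpha)\to(\varphi\Rightarrow\Box\alpha)$; I5: $((\varphi\Rightarrow(\alpha\vee\Box\beta))\wedge\neg(\varphi\Rightarrow\beta))\to(\varphi\Rightarrow\alpha)$;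 I6: $((\varphi\Rightarrow(\alpha\vee\Diamond\beta))\wedge(\varphi\Rightarrow\neg\beta))\to(\varphi\Rightarrow\alpha)$; I7: $\neg(\varphi\Rightarrow\beta)\to(\varphi\Rightarrow\Diamond\neg\beta)$. *)

theory Defs
  imports Main
begin

datatype 'p fm =
    Var 'p
  | Neg "'p fm"
  | Conj "'p fm" "'p fm"
  | Box "'p fm"
  | Cond "'p fm" "'p fm"

definition Disj :: "'p fm \<Rightarrow> 'p fm \<Rightarrow> 'p fm" where
  "Disj a b = Neg (Conj (Neg a) (Neg b))"
definition Imp :: "'p fm \<Rightarrow> 'p fm \<Rightarrow> 'p fm" where
  "Imp a b = Neg (Conj a (Neg b))"
definition Iff :: "'p fm \<Rightarrow> 'p fm \<Rightarrow> 'p fm" where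
  "Iff a b = Conj (Imp a b) (Imp b a)"
definition Bot :: "'p fm" where
  "Bot = Conj (Var undefined) (Neg (Var undefined))"
definition Top :: "'p fm" where
  "Top = Neg Bot"
definition Dia :: "'p fm \<Rightarrow> 'p fm" where
  "Dia a = Neg (Box (Neg a))"

fun nonmodal :: "'p fm \<Rightarrow> bool" where
  "nonmodal (Var p) = True"
| "nonmodal (Neg a) = nonmodal a"
| "nonmodal (Conj a b) = (nonmodal a \<and> nonmodal b)"
| "nonmodal (Box a) = False"
| "nonmodal (Cond a b) = False"

text \<open>Truth at world w relative to information state X, valuation V.
  The Cond clause is the literal unfolding of
  w, [[phi]]^X |= Box psi with [[phi]]^X = {v : X. v, X |= phi}.\<close>
fun sat :: "('p \<Rightarrow> 'w set) \<Rightarrow> 'w \<Rightarrow> 'w set \<Rightarrow> 'p fm \<Rightarrow> bool" where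
  "sat V w X (Var p) = (w \<in> V p)"
| "sat V w X (Neg a) = (\<not> sat V w X a)"
| "sat V w X (Conj a b) = (sat V w X a \<and> sat V w X b)"
| "sat V w X (Box a) = (\<forall>v\<in>X. sat V v X a)"
| "sat V w X (Cond a b) =
     (\<forall>v\<in>{u\<in>X. sat V u X a}. sat V v {u\<in>X. sat V u X a} b)"

definition is_model :: "'w set \<Rightarrow> ('p \<Rightarrow> 'w set) \<Rightarrow> bool" where
  "is_model W V \<longleftrightarrow> W \<noteq> {} \<and> (\<forall>p. V p \<subseteq> W)"

definition valid_in :: "'w itself \<Rightarrow> 'p fm \<Rightarrow> bool" where
  "valid_in TYPE('w) \<phi> \<longleftrightarrow>
     (\<forall>(W::'w set) V w X. is_model W V \<and> w \<in> W \<and> X \<subseteq> W \<longrightarrow> sat V w X \<phi>)"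

definition info_cons_in :: "'w itself \<Rightarrow> 'p fm set \<Rightarrow> 'p fm \<Rightarrow> bool" where
  "info_cons_in TYPE('w) \<Sigma> \<phi> \<longleftrightarrow>
     (\<forall>(W::'w set) V X. is_model W V \<and> X \<subseteq> W \<longrightarrow>
        (\<forall>\<sigma>\<in>\<Sigma>. \<forall>w\<in>X. sat V w X \<sigma>) \<longrightarrow> (\<forall>w\<in>X. sat V w X \<phi>))"

datatype pform = PVar nat | PNeg pform | PConj pform pform

fun peval :: "(nat \<Rightarrow> bool) \<Rightarrow> pform \<Rightarrow> bool" where
  "peval a (PVar n) = a n"
| "peval a (PNeg f) = (\<not> peval a f)"
| "peval a (PConj f g) = (peval a f \<and> peval a g)"

definition ptaut :: "pform \<Rightarrow> bool" where
  "ptaut f \<longleftrightarrow> (\<forall>a. peval a f)"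

fun psubst :: "(nat \<Rightarrow> 'p fm) \<Rightarrow> pform \<Rightarrow> 'p fm" where
  "psubst s (PVar n) = s n"
| "psubst s (PNeg f) = Neg (psubst s f)"
| "psubst s (PConj f g) = Conj (psubst s f) (psubst s g)"

definition taut_instance :: "'p fm \<Rightarrow> bool" where
  "taut_instance \<phi> \<longleftrightarrow> (\<exists>f s. ptaut f \<and> \<phi> = psubst s f)"

inductive repl :: "'p fm \<Rightarrow> 'p fm \<Rightarrow> 'p fm \<Rightarrow> 'p fm \<Rightarrow> bool" for a b where
  here: "repl a b a b"
| neg: "repl a b f f' \<Longrightarrow> repl a b (Neg f) (Neg f')"
| conjL: "repl a b f f' \<Longrightarrow> repl a b (Conj f g) (Conj f' g)"
| conjR: "repl a b g g' \<Longrightarrow> repl a b (Conj f g) (Conj f g')"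
| box: "repl a b f f' \<Longrightarrow> repl a b (Box f) (Box f')"
| condL: "repl a b f f' \<Longrightarrow> repl a b (Cond f g) (Cond f' g)"
| condR: "repl a b g g' \<Longrightarrow> repl a b (Cond f g) (Cond f g')"

inductive_set yalcin :: "'p fm set" where
  RE: "Iff a b \<in> yalcin \<Longrightarrow> repl a b f f' \<Longrightarrow> Iff f f' \<in> yalcin"
| MP: "f \<in> yalcin \<Longrightarrow> Imp f g \<in> yalcin \<Longrightarrow> g \<in> yalcin"
| Nec: "f \<in> yalcin \<Longrightarrow> Box f \<in> yalcin"
| Taut: "taut_instance f \<Longrightarrow> f \<in> yalcin"
| K: "Imp (Box (Imp f g)) (Imp (Box f) (Box g)) \<in> yalcin"
| Ax4: "Imp (Dia (Dia f)) (Dia f) \<in> yalcin"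
| Ax5: "Imp (Dia (Box f)) (Box f) \<in> yalcin"
| I1: "nonmodal \<pi> \<Longrightarrow> Iff (Cond f \<pi>) (Box (Imp f \<pi>)) \<in> yalcin"
| I2: "Iff (Cond f (Conj a b)) (Conj (Cond f a) (Cond f b)) \<in> yalcin"
| I3: "Imp (Cond f a) (Cond f (Disj a b)) \<in> yalcin"
| I4: "Imp (Cond f a) (Cond f (Box a)) \<in> yalcin"
| I5: "Imp (Conj (Cond f (Disj a (Box b))) (Neg (Cond f b))) (Cond f a) \<in> yalcin"
| I6: "Imp (Conj (Cond f (Disj a (Dia b))) (Cond f (Neg b))) (Cond f a) \<in> yalcin"
| I7: "Imp (Neg (Cond f b)) (Cond f (Dia (Neg b))) \<in> yalcin"

fun box_conj :: "'p fm list \<Rightarrow> 'p fm" where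
  "box_conj [] = Top"
| "box_conj [s] = Box s"
| "box_conj (s # ss) = Conj (Box s) (box_conj ss)"

end

theory Submission
  imports Defs
begin


fun ptv :: "('p fm \<Rightarrow> bool) \<Rightarrow> 'p fm \<Rightarrow> bool" where
  "ptv g (Neg a) = (\<not> ptv g a)"
| "ptv g (Conj a b) = (ptv g a \<and> ptv g b)"
| "ptv g a = g a"

lemma ptv_simps[simp]:
  "ptv g (Imp a b) = (ptv g a \<longrightarrow> ptv g b)"
  "ptv g (Disj a b) = (ptv g a \<or> ptv g b)"
  "ptv g (Iff a b) = (ptv g a = ptv g b)"
  "ptv g Bot = False"
  "ptv g Top = True"
  by (auto simp: Imp_def Disj_def Iff_def Bot_def Top_def)

fun patoms :: "'p fm \<Rightarrow> 'p fm list" where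
  "patoms (Neg a) = patoms a"
| "patoms (Conj a b) = patoms a @ patoms b"
| "patoms a = [a]"

fun enc :: "('p fm \<Rightarrow> nat) \<Rightarrow> 'p fm \<Rightarrow> pform" where
  "enc i (Neg a) = PNeg (enc i a)"
| "enc i (Conj a b) = PConj (enc i a) (enc i b)"
| "enc i a = PVar (i a)"

lemma psubst_enc: "(\<forall>x\<in>set (patoms \<phi>). s (i x) = x) \<Longrightarrow> psubst s (enc i \<phi>) = \<phi>"
  by (induction i \<phi> rule: enc.induct) auto

lemma peval_enc: "peval a (enc i \<phi>) = ptv (a \<circ> i) \<phi>"
  by (induction i \<phi> rule: enc.induct) auto

lemma taut: assumes "\<forall>g. ptv g \<phi>" shows "\<phi> \<in> yalcin"
proof -
  define L where "L = patoms \<phi>"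
  define i where "i = (\<lambda>x. SOME n. n < length L \<and> L ! n = x)"
  have "\<forall>x\<in>set L. L ! (i x) = x"
  proof
    fix x assume "x \<in> set L"
    then have "\<exists>n. n < length L \<and> L ! n = x" by (simp add: in_set_conv_nth)
    then show "L ! (i x) = x" unfolding i_def by (rule someI2_ex) auto
  qed
  then have "psubst (\<lambda>n. L ! n) (enc i \<phi>) = \<phi>" by (intro psubst_enc) (simp add: L_def)
  moreover have "ptaut (enc i \<phi>)" using assms by (simp add: ptaut_def peval_enc)
  ultimately have "taut_instance \<phi>" unfolding taut_instance_def by (intro exI[of _ "enc i \<phi>"] exI[of _ "\<lambda>n. L ! n"]) simp
  then show ?thesis by (rule yalcin.Taut)
qed

lemma prop_list: "(\<forall>x\<in>set xs. x \<in> yalcin) \<Longrightarrow> (\<forall>g. (\<forall>x\<in>set xs. ptv g x) \<longrightarrow> ptv g c) \<Longrightarrow> c \<in> yalcin"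
proof (induction xs arbitrary: c)
  case Nil then show ?case by (intro taut) simp
next
  case (Cons x xs)
  have "Imp x c \<in> yalcin" using Cons.prems by (intro Cons.IH) auto
  moreover have "x \<in> yalcin" using Cons.prems by simp
  ultimately show ?case by (rule yalcin.MP[rotated])
qed

lemma prop1: "a \<in> yalcin \<Longrightarrow> (\<forall>g. ptv g a \<longrightarrow> ptv g c) \<Longrightarrow> c \<in> yalcin"
  by (rule prop_list[of "[a]"]) auto
lemma prop2: "a \<in> yalcin \<Longrightarrow> b \<in> yalcin \<Longrightarrow> (\<forall>g. ptv g a \<longrightarrow> ptv g b \<longrightarrow> ptv g c) \<Longrightarrow> c \<in> yalcin"
  by (rule prop_list[of "[a,b]"]) auto
lemma prop3: "a \<in> yalcin \<Longrightarrow> b \<in> yalcin \<Longrightarrow> d \<in> yalcin \<Longrightarrow> (\<forall>g. ptv g a \<longrightarrow> ptv g b \<longrightarrow> ptv g d \<longrightarrow> ptv g c) \<Longrightarrow> c \<in> yalcin"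
  by (rule prop_list[of "[a,b,d]"]) auto

lemma iff_taut: "\<forall>g. ptv g a = ptv g b \<Longrightarrow> Iff a b \<in> yalcin"
  by (intro taut) auto

lemma iff_trans: "Iff a b \<in> yalcin \<Longrightarrow> Iff b c \<in> yalcin \<Longrightarrow> Iff a c \<in> yalcin"
  by (erule prop2) auto

lemma iff_box: "Iff a b \<in> yalcin \<Longrightarrow> Iff (Box a) (Box b) \<in> yalcin"
  by (rule yalcin.RE, assumption, rule repl.box, rule repl.here)
lemma iff_neg: "Iff a b \<in> yalcin \<Longrightarrow> Iff (Neg a) (Neg b) \<in> yalcin"
  by (rule yalcin.RE, assumption, rule repl.neg, rule repl.here)
lemma iff_conjL: "Iff a b \<in> yalcin \<Longrightarrow> Iff (Conj a c) (Conj b c) \<in> yalcin"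
  by (rule yalcin.RE, assumption, rule repl.conjL, rule repl.here)
lemma iff_conjR: "Iff a b \<in> yalcin \<Longrightarrow> Iff (Conj c a) (Conj c b) \<in> yalcin"
  by (rule yalcin.RE, assumption, rule repl.conjR, rule repl.here)
lemma iff_condL: "Iff a b \<in> yalcin \<Longrightarrow> Iff (Cond a c) (Cond b c) \<in> yalcin"
  by (rule yalcin.RE, assumption, rule repl.condL, rule repl.here)
lemma iff_condR: "Iff a b \<in> yalcin \<Longrightarrow> Iff (Cond c a) (Cond c b) \<in> yalcin"
  by (rule yalcin.RE, assumption, rule repl.condR, rule repl.here)




lemma sat_simps[simp]:
  "sat V w X (Imp a b) = (sat V w X a \<longrightarrow> sat V w X b)"
  "sat V w X (Disj a b) = (sat V w X a \<or> sat V w X b)"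
  "sat V w X (Iff a b) = (sat V w X a = sat V w X b)"
  "sat V w X (Dia a) = (\<exists>v\<in>X. sat V v X a)"
  "sat V w X Bot = False"
  "sat V w X Top = True"
  by (auto simp: Imp_def Disj_def Iff_def Bot_def Top_def Dia_def)

lemma sat_nonmodal: "nonmodal \<pi> \<Longrightarrow> sat V w X \<pi> = sat V w Y \<pi>"
  by (induction \<pi>) auto

lemma sat_psubst: "sat V w X (psubst s f) = peval (\<lambda>n. sat V w X (s n)) f"
  by (induction f) auto

lemma sat_repl:
  assumes "repl a b f f'" "\<forall>w\<in>W. \<forall>X\<subseteq>W. sat V w X a = sat V w X b"
  shows "w \<in> W \<Longrightarrow> X \<subseteq> W \<Longrightarrow> sat V w X f = sat V w X f'"
  using assms(1)
proof (induction arbitrary: w X rule: repl.induct)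
  case here then show ?case using assms(2) by blast
next
  case (neg f f') then show ?case by simp
next
  case (conjL f f' g) then show ?case by simp
next
  case (conjR g g' f) then show ?case by simp
next
  case (box f f') then show ?case by auto
next
  case (condL f f' g)
  have "{u\<in>X. sat V u X f} = {u\<in>X. sat V u X f'}" using condL by auto
  then show ?case by simp
next
  case (condR g g' f)
  let ?Y = "{u\<in>X. sat V u X f}"
  have Y: "?Y \<subseteq> W" using condR by auto
  have "\<forall>v\<in>?Y. sat V v ?Y g = sat V v ?Y g'" using condR.IH Y by blast
  then show ?case by simp
qed

lemma soundness:
  "\<phi> \<in> yalcin \<Longrightarrow> is_model W V \<Longrightarrow> w \<in> W \<Longrightarrow> X \<subseteq> W \<Longrightarrow> sat V w X \<phi>"
proof (induction arbitrary: W V w X rule: yalcin.induct)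
  case (RE a b f f')
  have "\<forall>w\<in>W. \<forall>X\<subseteq>W. sat V w X a = sat V w X b"
  proof (intro ballI allI impI)
    fix w' X' assume "w' \<in> W" "X' \<subseteq> W"
    then have "sat V w' X' (Iff a b)" by (rule RE.IH[OF RE.prems(1)])
    then show "sat V w' X' a = sat V w' X' b" by (simp only: sat_simps)
  qed
  then show ?case using sat_repl[OF RE.hyps(2), of W V w X] RE.prems by simp
next
  case (MP f g)
  have "sat V w X f" by (rule MP.IH(1)[OF MP.prems])
  moreover have "sat V w X (Imp f g)" by (rule MP.IH(2)[OF MP.prems])
  ultimately show ?case by simp
next
  case (Nec f)
  have "\<forall>v\<in>X. sat V v X f"
  proof
    fix v assume "v \<in> X"
    then have "v \<in> W" using Nec.prems(3) by blast
    then show "sat V v X f" by (rule Nec.IH[OF Nec.prems(1) _ Nec.prems(3)])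
  qed
  then show ?case by simp
next
  case (Taut f)
  then obtain p s where "ptaut p" "f = psubst s p" unfolding taut_instance_def by blast
  then show ?case unfolding ptaut_def by (simp only: sat_psubst)
next
  case (K f g) then show ?case by simp
next
  case (Ax4 f) then show ?case by simp
next
  case (Ax5 f) then show ?case by auto
next
  case (I1 \<pi> f)
  have "\<And>v. sat V v {u\<in>X. sat V u X f} \<pi> = sat V v X \<pi>" by (rule sat_nonmodal[OF I1.hyps])
  then show ?case by auto
next
  case (I2 f a b) then show ?case by auto
next
  case (I3 f a b) then show ?case by auto
next
  case (I4 f a) then show ?case by auto
next
  case (I5 f a b) then show ?case by auto
next
  case (I6 f a b) then show ?case by auto
next
  case (I7 f b) then show ?case by auto
qed

lemma sat_box_conj: "sat V w X (box_conj ss) = (\<forall>\<sigma>\<in>set ss. \<forall>v\<in>X. sat V v X \<sigma>)"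
  by (induction ss rule: box_conj.induct) auto

lemma info_valid:
  fixes ss :: "'p fm list" and \<phi> :: "'p fm"
  shows "info_cons_in TYPE('w) (set ss) \<phi> = valid_in TYPE('w) (Imp (box_conj ss) (Box \<phi>))"
proof
  assume H: "info_cons_in TYPE('w) (set ss) \<phi>"
  show "valid_in TYPE('w) (Imp (box_conj ss) (Box \<phi>))"
    unfolding valid_in_def
  proof (intro allI impI)
    fix W :: "'w set" and V :: "'p \<Rightarrow> 'w set" and w X
    assume A: "is_model W V \<and> w \<in> W \<and> X \<subseteq> W"
    have "(\<forall>\<sigma>\<in>set ss. \<forall>v\<in>X. sat V v X \<sigma>) \<longrightarrow> (\<forall>v\<in>X. sat V v X \<phi>)"
      using H A unfolding info_cons_in_def by blast
    then show "sat V w X (Imp (box_conj ss) (Box \<phi>))"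
      by (simp add: sat_box_conj)
  qed
next
  assume H: "valid_in TYPE('w) (Imp (box_conj ss) (Box \<phi>))"
  show "info_cons_in TYPE('w) (set ss) \<phi>"
    unfolding info_cons_in_def
  proof (intro allI impI)
    fix W :: "'w set" and V :: "'p \<Rightarrow> 'w set" and X
    assume M: "is_model W V \<and> X \<subseteq> W" and S: "\<forall>\<sigma>\<in>set ss. \<forall>w\<in>X. sat V w X \<sigma>"
    then obtain w where "w \<in> W" unfolding is_model_def by blast
    then have "sat V w X (Imp (box_conj ss) (Box \<phi>))" using H M unfolding valid_in_def by blast
    then show "\<forall>w\<in>X. sat V w X \<phi>" using S by (simp add: sat_box_conj)
  qed
qed




fun cfree :: "'p fm \<Rightarrow> bool" where
  "cfree (Var p) = True"
| "cfree (Neg a) = cfree a"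
| "cfree (Conj a b) = (cfree a \<and> cfree b)"
| "cfree (Box a) = cfree a"
| "cfree (Cond a b) = False"

lemma cfree_simps[simp]:
  "cfree (Imp a b) = (cfree a \<and> cfree b)"
  "cfree (Disj a b) = (cfree a \<and> cfree b)"
  "cfree (Iff a b) = (cfree a \<and> cfree b)"
  "cfree Bot" "cfree Top"
  by (auto simp: Imp_def Disj_def Iff_def Bot_def Top_def)

lemma nonmodal_Bot[simp]: "nonmodal Bot" by (simp add: Bot_def)
lemma nonmodal_Disj[simp]: "nonmodal (Disj a b) = (nonmodal a \<and> nonmodal b)" by (simp add: Disj_def)

lemma nonmodal_cfree: "nonmodal x \<Longrightarrow> cfree x"
  by (induction x) auto

fun disjs :: "'p fm list \<Rightarrow> 'p fm" where
  "disjs [] = Bot"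
| "disjs (x # xs) = Disj x (disjs xs)"

lemma ptv_disjs[simp]: "ptv g (disjs xs) = (\<exists>x\<in>set xs. ptv g x)"
  by (induction xs) auto

fun msz :: "'p fm \<Rightarrow> nat" where
  "msz (Var p) = 1"
| "msz (Neg a) = msz a + 1"
| "msz (Conj a b) = msz a + msz b + 2"
| "msz (Box a) = msz a + 1"
| "msz (Cond a b) = msz a + msz b + 1"

lemma msz_pos: "msz x > 0" by (cases x) auto

lemma box_out: "Iff (Cond \<phi> (Disj \<alpha> (Box b))) (Disj (Cond \<phi> b) (Cond \<phi> \<alpha>)) \<in> yalcin"
proof -
  have 1: "Imp (Conj (Cond \<phi> (Disj \<alpha> (Box b))) (Neg (Cond \<phi> b))) (Cond \<phi> \<alpha>) \<in> yalcin" by (rule yalcin.I5)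
  have 2: "Imp (Cond \<phi> \<alpha>) (Cond \<phi> (Disj \<alpha> (Box b))) \<in> yalcin" by (rule yalcin.I3)
  have 3: "Imp (Cond \<phi> b) (Cond \<phi> (Box b)) \<in> yalcin" by (rule yalcin.I4)
  have 4: "Imp (Cond \<phi> (Box b)) (Cond \<phi> (Disj (Box b) \<alpha>)) \<in> yalcin" by (rule yalcin.I3)
  have 5: "Iff (Cond \<phi> (Disj (Box b) \<alpha>)) (Cond \<phi> (Disj \<alpha> (Box b))) \<in> yalcin"
    by (rule iff_condR, rule iff_taut) auto
  show ?thesis
    by (rule prop_list[of "[Imp (Conj (Cond \<phi> (Disj \<alpha> (Box b))) (Neg (Cond \<phi> b))) (Cond \<phi> \<alpha>),
       Imp (Cond \<phi> \<alpha>) (Cond \<phi> (Disj \<alpha> (Box b))), Imp (Cond \<phi> b) (Cond \<phi> (Box b)),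
       Imp (Cond \<phi> (Box b)) (Cond \<phi> (Disj (Box b) \<alpha>)),
       Iff (Cond \<phi> (Disj (Box b) \<alpha>)) (Cond \<phi> (Disj \<alpha> (Box b)))]"])
      (use 1 2 3 4 5 in simp, auto)
qed

lemma dia_out: "Iff (Cond \<phi> (Disj \<alpha> (Neg (Box b)))) (Disj (Neg (Cond \<phi> b)) (Cond \<phi> \<alpha>)) \<in> yalcin"
proof -
  have nn: "Iff (Neg (Neg b)) b \<in> yalcin" by (rule iff_taut) simp
  have h1: "Iff (Cond \<phi> (Disj \<alpha> (Dia (Neg b)))) (Cond \<phi> (Disj \<alpha> (Neg (Box b)))) \<in> yalcin"
    unfolding Disj_def Dia_def
    by (rule yalcin.RE[OF nn], rule repl.condR, rule repl.neg, rule repl.conjR, rule repl.neg,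
        rule repl.neg, rule repl.box, rule repl.here)
  have h2: "Iff (Cond \<phi> (Neg (Neg b))) (Cond \<phi> b) \<in> yalcin" by (rule iff_condR[OF nn])
  have h3: "Imp (Conj (Cond \<phi> (Disj \<alpha> (Dia (Neg b)))) (Cond \<phi> (Neg (Neg b)))) (Cond \<phi> \<alpha>) \<in> yalcin"
    by (rule yalcin.I6)
  have h4: "Imp (Cond \<phi> \<alpha>) (Cond \<phi> (Disj \<alpha> (Neg (Box b)))) \<in> yalcin" by (rule yalcin.I3)
  have h5: "Imp (Neg (Cond \<phi> b)) (Cond \<phi> (Dia (Neg b))) \<in> yalcin" by (rule yalcin.I7)
  have h6: "Imp (Cond \<phi> (Dia (Neg b))) (Cond \<phi> (Disj (Dia (Neg b)) \<alpha>)) \<in> yalcin" by (rule yalcin.I3)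
  have h7: "Iff (Cond \<phi> (Disj (Dia (Neg b)) \<alpha>)) (Cond \<phi> (Disj \<alpha> (Dia (Neg b)))) \<in> yalcin"
    by (rule iff_condR, rule iff_taut) auto
  show ?thesis
    by (rule prop_list[of "[Iff (Cond \<phi> (Disj \<alpha> (Dia (Neg b)))) (Cond \<phi> (Disj \<alpha> (Neg (Box b)))),
      Iff (Cond \<phi> (Neg (Neg b))) (Cond \<phi> b),
      Imp (Conj (Cond \<phi> (Disj \<alpha> (Dia (Neg b)))) (Cond \<phi> (Neg (Neg b)))) (Cond \<phi> \<alpha>),
      Imp (Cond \<phi> \<alpha>) (Cond \<phi> (Disj \<alpha> (Neg (Box b)))),
      Imp (Neg (Cond \<phi> b)) (Cond \<phi> (Dia (Neg b))),
      Imp (Cond \<phi> (Dia (Neg b))) (Cond \<phi> (Disj (Dia (Neg b)) \<alpha>)),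
      Iff (Cond \<phi> (Disj (Dia (Neg b)) \<alpha>)) (Cond \<phi> (Disj \<alpha> (Dia (Neg b))))]"])
      (use h1 h2 h3 h4 h5 h6 h7 in simp, auto)
qed

lemma step:
  assumes "Iff A B \<in> yalcin" "\<exists>\<theta>. cfree \<theta> \<and> Iff (Cond \<phi> B) \<theta> \<in> yalcin"
  shows "\<exists>\<theta>. cfree \<theta> \<and> Iff (Cond \<phi> A) \<theta> \<in> yalcin"
proof -
  obtain \<theta> where t: "cfree \<theta>" "Iff (Cond \<phi> B) \<theta> \<in> yalcin" using assms(2) by blast
  have "Iff (Cond \<phi> A) (Cond \<phi> B) \<in> yalcin" by (rule iff_condR[OF assms(1)])
  then have "Iff (Cond \<phi> A) \<theta> \<in> yalcin" using t(2) by (rule iff_trans)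
  then show ?thesis using t(1) by blast
qed

lemma red:
  assumes "cfree \<phi>" "\<forall>x\<in>set L. cfree x" "nonmodal \<pi>"
  shows "\<exists>\<theta>. cfree \<theta> \<and> Iff (Cond \<phi> (Disj \<pi> (disjs L))) \<theta> \<in> yalcin"
  using assms(2,3)
proof (induction "sum_list (map msz L)" arbitrary: L \<pi> rule: less_induct)
  case less
  show ?case
  proof (cases L)
    case Nil
    have "nonmodal (Disj \<pi> Bot)" using less.prems by simp
    then have "Iff (Cond \<phi> (Disj \<pi> Bot)) (Box (Imp \<phi> (Disj \<pi> Bot))) \<in> yalcin" by (rule yalcin.I1)
    moreover have "cfree (Box (Imp \<phi> (Disj \<pi> Bot)))"
      using assms(1) nonmodal_cfree[OF less.prems(2)] by simp
    ultimately show ?thesis using Nil by (intro exI[of _ "Box (Imp \<phi> (Disj \<pi> Bot))"]) simp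
  next
    case (Cons x L')
    have cx: "cfree x" and cL': "\<forall>y\<in>set L'. cfree y" using less.prems Cons by auto
    have sL': "sum_list (map msz L') < sum_list (map msz L)" using Cons msz_pos[of x] by simp
    have IH: "\<And>M \<rho>. sum_list (map msz M) < sum_list (map msz L) \<Longrightarrow> \<forall>y\<in>set M. cfree y \<Longrightarrow> nonmodal \<rho> \<Longrightarrow>
       \<exists>\<theta>. cfree \<theta> \<and> Iff (Cond \<phi> (Disj \<rho> (disjs M))) \<theta> \<in> yalcin"
      using less.hyps by blast
    have nonm: ?thesis if xe: "nonmodal x"
    proof (rule step)
      show "Iff (Disj \<pi> (disjs L)) (Disj (Disj \<pi> x) (disjs L')) \<in> yalcin"
        using Cons by (intro iff_taut) auto
      show "\<exists>\<theta>. cfree \<theta> \<and> Iff (Cond \<phi> (Disj (Disj \<pi> x) (disjs L'))) \<theta> \<in> yalcin"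
        using IH[OF sL' cL'] less.prems(2) xe by simp
    qed
    have conj: ?thesis if xe: "x = Conj a b" for a b
    proof -
      have sa: "sum_list (map msz (a # L')) < sum_list (map msz L)" using Cons xe by simp
      have sb: "sum_list (map msz (b # L')) < sum_list (map msz L)" using Cons xe by simp
      obtain \<theta>a where ta: "cfree \<theta>a" "Iff (Cond \<phi> (Disj \<pi> (disjs (a # L')))) \<theta>a \<in> yalcin"
        using IH[OF sa _ less.prems(2)] cL' cx xe by auto
      obtain \<theta>b where tb: "cfree \<theta>b" "Iff (Cond \<phi> (Disj \<pi> (disjs (b # L')))) \<theta>b \<in> yalcin"
        using IH[OF sb _ less.prems(2)] cL' cx xe by auto
      have e1: "Iff (Cond \<phi> (Disj \<pi> (disjs L))) (Cond \<phi> (Conj (Disj \<pi> (disjs (a # L'))) (Disj \<pi> (disjs (b # L'))))) \<in> yalcin"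
        using Cons xe by (intro iff_condR iff_taut) auto
      have e2: "Iff (Cond \<phi> (Conj (Disj \<pi> (disjs (a # L'))) (Disj \<pi> (disjs (b # L')))))
          (Conj (Cond \<phi> (Disj \<pi> (disjs (a # L')))) (Cond \<phi> (Disj \<pi> (disjs (b # L'))))) \<in> yalcin"
        by (rule yalcin.I2)
      have "Iff (Cond \<phi> (Disj \<pi> (disjs L))) (Conj \<theta>a \<theta>b) \<in> yalcin"
        by (rule prop_list[of "[Iff (Cond \<phi> (Disj \<pi> (disjs L))) (Cond \<phi> (Conj (Disj \<pi> (disjs (a # L'))) (Disj \<pi> (disjs (b # L'))))),
           Iff (Cond \<phi> (Conj (Disj \<pi> (disjs (a # L'))) (Disj \<pi> (disjs (b # L')))))
          (Conj (Cond \<phi> (Disj \<pi> (disjs (a # L')))) (Cond \<phi> (Disj \<pi> (disjs (b # L'))))),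
          Iff (Cond \<phi> (Disj \<pi> (disjs (a # L')))) \<theta>a, Iff (Cond \<phi> (Disj \<pi> (disjs (b # L')))) \<theta>b]"])
          (use e1 e2 ta tb in simp, auto)
      then show ?thesis using ta tb by (intro exI[of _ "Conj \<theta>a \<theta>b"]) simp
    qed
    have nneg: ?thesis if xe: "x = Neg (Neg a)" for a
    proof (rule step)
      show "Iff (Disj \<pi> (disjs L)) (Disj \<pi> (disjs (a # L'))) \<in> yalcin"
        using Cons xe by (intro iff_taut) auto
      have sa: "sum_list (map msz (a # L')) < sum_list (map msz L)" using Cons xe by simp
      show "\<exists>\<theta>. cfree \<theta> \<and> Iff (Cond \<phi> (Disj \<pi> (disjs (a # L')))) \<theta> \<in> yalcin"
        using IH[OF sa _ less.prems(2)] cL' cx xe by auto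
    qed
    have nconj: ?thesis if xe: "x = Neg (Conj a b)" for a b
    proof (rule step)
      show "Iff (Disj \<pi> (disjs L)) (Disj \<pi> (disjs (Neg a # Neg b # L'))) \<in> yalcin"
        using Cons xe by (intro iff_taut) auto
      have sa: "sum_list (map msz (Neg a # Neg b # L')) < sum_list (map msz L)" using Cons xe by simp
      show "\<exists>\<theta>. cfree \<theta> \<and> Iff (Cond \<phi> (Disj \<pi> (disjs (Neg a # Neg b # L')))) \<theta> \<in> yalcin"
        using IH[OF sa _ less.prems(2)] cL' cx xe by auto
    qed
    have rest: "\<exists>\<theta>. cfree \<theta> \<and> Iff (Cond \<phi> (Disj \<pi> (disjs L'))) \<theta> \<in> yalcin"
      using IH[OF sL' cL' less.prems(2)] .
    have single: "\<exists>\<theta>. cfree \<theta> \<and> Iff (Cond \<phi> b) \<theta> \<in> yalcin"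
      if xe: "msz b < sum_list (map msz L)" "cfree b" for b
    proof (rule step)
      show "Iff b (Disj Bot (disjs [b])) \<in> yalcin" by (intro iff_taut) auto
      show "\<exists>\<theta>. cfree \<theta> \<and> Iff (Cond \<phi> (Disj Bot (disjs [b]))) \<theta> \<in> yalcin"
        using IH[of "[b]" Bot] xe by simp
    qed
    have box: ?thesis if xe: "x = Box b" for b
    proof -
      obtain \<theta>b where tb: "cfree \<theta>b" "Iff (Cond \<phi> b) \<theta>b \<in> yalcin"
        using single[of b] Cons xe cx by auto
      obtain \<theta>r where tr: "cfree \<theta>r" "Iff (Cond \<phi> (Disj \<pi> (disjs L'))) \<theta>r \<in> yalcin"
        using rest by blast
      have e1: "Iff (Cond \<phi> (Disj \<pi> (disjs L))) (Cond \<phi> (Disj (Disj \<pi> (disjs L')) (Box b))) \<in> yalcin"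
        using Cons xe by (intro iff_condR iff_taut) auto
      have e2: "Iff (Cond \<phi> (Disj (Disj \<pi> (disjs L')) (Box b))) (Disj (Cond \<phi> b) (Cond \<phi> (Disj \<pi> (disjs L')))) \<in> yalcin"
        by (rule box_out)
      have "Iff (Cond \<phi> (Disj \<pi> (disjs L))) (Disj \<theta>b \<theta>r) \<in> yalcin"
        by (rule prop_list[of "[Iff (Cond \<phi> (Disj \<pi> (disjs L))) (Cond \<phi> (Disj (Disj \<pi> (disjs L')) (Box b))),
          Iff (Cond \<phi> (Disj (Disj \<pi> (disjs L')) (Box b))) (Disj (Cond \<phi> b) (Cond \<phi> (Disj \<pi> (disjs L')))),
          Iff (Cond \<phi> b) \<theta>b, Iff (Cond \<phi> (Disj \<pi> (disjs L'))) \<theta>r]"])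
          (use e1 e2 tb tr in simp, auto)
      then show ?thesis using tb tr by (intro exI[of _ "Disj \<theta>b \<theta>r"]) simp
    qed
    have nbox: ?thesis if xe: "x = Neg (Box b)" for b
    proof -
      obtain \<theta>b where tb: "cfree \<theta>b" "Iff (Cond \<phi> b) \<theta>b \<in> yalcin"
        using single[of b] Cons xe cx by auto
      obtain \<theta>r where tr: "cfree \<theta>r" "Iff (Cond \<phi> (Disj \<pi> (disjs L'))) \<theta>r \<in> yalcin"
        using rest by blast
      have e1: "Iff (Cond \<phi> (Disj \<pi> (disjs L))) (Cond \<phi> (Disj (Disj \<pi> (disjs L')) (Neg (Box b)))) \<in> yalcin"
        using Cons xe by (intro iff_condR iff_taut) auto
      have e2: "Iff (Cond \<phi> (Disj (Disj \<pi> (disjs L')) (Neg (Box b)))) (Disj (Neg (Cond \<phi> b)) (Cond \<phi> (Disj \<pi> (disjs L')))) \<in> yalcin"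
        by (rule dia_out)
      have "Iff (Cond \<phi> (Disj \<pi> (disjs L))) (Disj (Neg \<theta>b) \<theta>r) \<in> yalcin"
        by (rule prop_list[of "[Iff (Cond \<phi> (Disj \<pi> (disjs L))) (Cond \<phi> (Disj (Disj \<pi> (disjs L')) (Neg (Box b)))),
          Iff (Cond \<phi> (Disj (Disj \<pi> (disjs L')) (Neg (Box b)))) (Disj (Neg (Cond \<phi> b)) (Cond \<phi> (Disj \<pi> (disjs L')))),
          Iff (Cond \<phi> b) \<theta>b, Iff (Cond \<phi> (Disj \<pi> (disjs L'))) \<theta>r]"])
          (use e1 e2 tb tr in simp, auto)
      then show ?thesis using tb tr by (intro exI[of _ "Disj (Neg \<theta>b) \<theta>r"]) simp
    qed
    show ?thesis
    proof (cases x)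
      case (Var p) then show ?thesis using nonm by simp
    next
      case (Neg y)
      show ?thesis
      proof (cases y)
        case (Var p) then show ?thesis using nonm Neg by simp
      next
        case (Neg a) then show ?thesis using nneg \<open>x = Neg y\<close> by simp
      next
        case (Conj a b) then show ?thesis using nconj \<open>x = Neg y\<close> by simp
      next
        case (Box b) then show ?thesis using nbox \<open>x = Neg y\<close> by simp
      next
        case (Cond a b) then show ?thesis using cx \<open>x = Neg y\<close> by simp
      qed
    next
      case (Conj a b) then show ?thesis using conj by simp
    next
      case (Box b) then show ?thesis using box by simp
    next
      case (Cond a b) then show ?thesis using cx by simp
    qed
  qed
qed

lemma red1:
  assumes "cfree \<phi>" "cfree \<psi>"
  shows "\<exists>\<theta>. cfree \<theta> \<and> Iff (Cond \<phi> \<psi>) \<theta> \<in> yalcin"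
proof (rule step)
  show "Iff \<psi> (Disj Bot (disjs [\<psi>])) \<in> yalcin" by (intro iff_taut) auto
  show "\<exists>\<theta>. cfree \<theta> \<and> Iff (Cond \<phi> (Disj Bot (disjs [\<psi>]))) \<theta> \<in> yalcin"
    using red[of \<phi> "[\<psi>]" Bot] assms by simp
qed

lemma elim: "\<exists>\<psi>'. cfree \<psi>' \<and> Iff \<psi> \<psi>' \<in> yalcin"
proof (induction \<psi>)
  case (Var p)
  have "Iff (Var p) (Var p) \<in> yalcin" by (intro iff_taut) auto
  then show ?case by (intro exI[of _ "Var p"]) simp
next
  case (Neg a)
  then obtain a' where "cfree a'" "Iff a a' \<in> yalcin" by blast
  then show ?case by (intro exI[of _ "Neg a'"]) (simp add: iff_neg)
next
  case (Conj a b)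
  then obtain a' b' where a: "cfree a'" "Iff a a' \<in> yalcin" and b: "cfree b'" "Iff b b' \<in> yalcin" by blast
  have "Iff (Conj a b) (Conj a' b') \<in> yalcin"
    by (rule iff_trans[OF iff_conjL[OF a(2)] iff_conjR[OF b(2)]])
  then show ?case using a b by (intro exI[of _ "Conj a' b'"]) simp
next
  case (Box a)
  then obtain a' where "cfree a'" "Iff a a' \<in> yalcin" by blast
  then show ?case by (intro exI[of _ "Box a'"]) (simp add: iff_box)
next
  case (Cond a b)
  then obtain a' b' where a: "cfree a'" "Iff a a' \<in> yalcin" and b: "cfree b'" "Iff b b' \<in> yalcin" by blast
  obtain \<theta> where t: "cfree \<theta>" "Iff (Cond a' b') \<theta> \<in> yalcin" using red1[OF a(1) b(1)] by blast
  have "Iff (Cond a b) (Cond a' b') \<in> yalcin"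
    by (rule iff_trans[OF iff_condL[OF a(2)] iff_condR[OF b(2)]])
  then have "Iff (Cond a b) \<theta> \<in> yalcin" using t(2) by (rule iff_trans)
  then show ?case using t(1) by blast
qed




fun conjs :: "'p fm list \<Rightarrow> 'p fm" where
  "conjs [] = Top"
| "conjs (x # xs) = Conj x (conjs xs)"

lemma ptv_conjs[simp]: "ptv g (conjs xs) = (\<forall>x\<in>set xs. ptv g x)"
  by (induction xs) auto

fun sub :: "'p fm \<Rightarrow> 'p fm list" where
  "sub (Var p) = [Var p]"
| "sub (Neg a) = Neg a # sub a"
| "sub (Conj a b) = Conj a b # sub a @ sub b"
| "sub (Box a) = Box a # sub a"
| "sub (Cond a b) = Cond a b # sub a @ sub b"

lemma sub_self: "x \<in> set (sub x)" by (cases x) auto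

lemma sub_trans: "x \<in> set (sub \<phi>) \<Longrightarrow> set (sub x) \<subseteq> set (sub \<phi>)"
  by (induction \<phi>) auto

definition lit :: "'p fm list \<Rightarrow> 'p fm set \<Rightarrow> 'p fm" where
  "lit cs D = conjs (map (\<lambda>c. if c \<in> D then c else Neg c) cs)"

lemma ptv_lit: "ptv g (lit cs D) = (\<forall>c\<in>set cs. ptv g c = (c \<in> D))"
  unfolding lit_def by (induction cs) auto

definition cons :: "'p fm \<Rightarrow> bool" where
  "cons \<chi> \<longleftrightarrow> Neg \<chi> \<notin> yalcin"

definition atom :: "'p fm list \<Rightarrow> 'p fm set \<Rightarrow> bool" where
  "atom cs D \<longleftrightarrow> D \<subseteq> set cs \<and> cons (lit cs D)"

lemma cons_sat: "cons \<chi> \<Longrightarrow> \<exists>g. ptv g \<chi>"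
  unfolding cons_def using taut[of "Neg \<chi>"] by auto

lemma cons_mono: "cons a \<Longrightarrow> \<forall>g. ptv g a \<longrightarrow> ptv g b \<Longrightarrow> cons b"
  unfolding cons_def using prop1[of "Neg b" "Neg a"] by auto

lemma cons_split: "cons \<chi> \<Longrightarrow> cons (Conj \<chi> c) \<or> cons (Conj \<chi> (Neg c))"
  unfolding cons_def using prop2[of "Neg (Conj \<chi> c)" "Neg (Conj \<chi> (Neg c))" "Neg \<chi>"] by auto

lemma ext: "distinct cs \<Longrightarrow> cons \<chi> \<Longrightarrow> \<exists>D\<subseteq>set cs. cons (Conj \<chi> (lit cs D))"
proof (induction cs arbitrary: \<chi>)
  case Nil
  then show ?case by (intro exI[of _ "{}"]) (auto simp: lit_def elim: cons_mono)
next
  case (Cons c cs)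
  have cn: "c \<notin> set cs" "distinct cs" using Cons.prems by auto
  have eq: "\<And>D. lit cs (insert c D) = lit cs D" "\<And>D. lit cs (D - {c}) = lit cs D"
    unfolding lit_def using cn by (auto intro!: arg_cong[where f=conjs])
  from cons_split[OF Cons.prems(2)] show ?case
  proof
    assume "cons (Conj \<chi> c)"
    then obtain D where D: "D \<subseteq> set cs" "cons (Conj (Conj \<chi> c) (lit cs D))" using Cons.IH cn by blast
    have "cons (Conj \<chi> (lit (c # cs) (insert c D)))"
      by (rule cons_mono[OF D(2)]) (auto simp: ptv_lit)
    then show ?thesis using D(1) by (intro exI[of _ "insert c D"]) auto
  next
    assume "cons (Conj \<chi> (Neg c))"
    then obtain D where D: "D \<subseteq> set cs" "cons (Conj (Conj \<chi> (Neg c)) (lit cs D))" using Cons.IH cn by blast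
    have "c \<notin> D" using D(1) cn by auto
    have "cons (Conj \<chi> (lit (c # cs) D))"
      by (rule cons_mono[OF D(2)]) (use \<open>c \<notin> D\<close> in \<open>auto simp: ptv_lit\<close>)
    then show ?thesis using D(1) by (intro exI[of _ D]) auto
  qed
qed

lemma atom_g: "atom cs D \<Longrightarrow> \<exists>g. \<forall>c\<in>set cs. ptv g c = (c \<in> D)"
  unfolding atom_def using cons_sat ptv_lit by metis

lemma imp_trans: "Imp a b \<in> yalcin \<Longrightarrow> Imp b c \<in> yalcin \<Longrightarrow> Imp a c \<in> yalcin"
  by (erule prop2) auto

lemma conjs_intro: "(\<forall>x\<in>set xs. Imp A x \<in> yalcin) \<Longrightarrow> Imp A (conjs xs) \<in> yalcin"
proof (induction xs)
  case Nil then show ?case by (intro taut) simp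
next
  case (Cons x xs)
  have "Imp A x \<in> yalcin" "Imp A (conjs xs) \<in> yalcin" using Cons by auto
  then show ?case by (rule prop2) auto
qed

lemma boxK_list: "Imp (conjs xs) y \<in> yalcin \<Longrightarrow> Imp (conjs (map Box xs)) (Box y) \<in> yalcin"
proof (induction xs arbitrary: y)
  case Nil
  have "y \<in> yalcin" using Nil by (rule prop1) simp
  then have "Box y \<in> yalcin" by (rule yalcin.Nec)
  then show ?case by (rule prop1) simp
next
  case (Cons x xs)
  have "Imp (conjs xs) (Imp x y) \<in> yalcin" using Cons.prems by (rule prop1) auto
  then have "Imp (conjs (map Box xs)) (Box (Imp x y)) \<in> yalcin" by (rule Cons.IH)
  moreover have "Imp (Box (Imp x y)) (Imp (Box x) (Box y)) \<in> yalcin" by (rule yalcin.K)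
  ultimately show ?case by (rule prop2) auto
qed

lemma ax4': "Imp (Box c) (Box (Box c)) \<in> yalcin"
proof -
  have nn: "Iff (Neg (Neg c)) c \<in> yalcin" by (rule iff_taut) simp
  have a: "Imp (Dia (Dia (Neg c))) (Dia (Neg c)) \<in> yalcin" by (rule yalcin.Ax4)
  have b: "Iff (Box (Neg (Neg c))) (Box c) \<in> yalcin" by (rule iff_box[OF nn])
  have c: "Iff (Box (Neg (Neg (Box (Neg (Neg c)))))) (Box (Neg (Neg (Box c)))) \<in> yalcin"
    by (rule yalcin.RE[OF nn], rule repl.box, rule repl.neg, rule repl.neg, rule repl.box, rule repl.here)
  have d: "Iff (Box (Neg (Neg (Box c)))) (Box (Box c)) \<in> yalcin"
    by (rule iff_box, rule iff_taut) simp
  show ?thesis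
    by (rule prop_list[of "[Imp (Dia (Dia (Neg c))) (Dia (Neg c)), Iff (Box (Neg (Neg c))) (Box c),
      Iff (Box (Neg (Neg (Box (Neg (Neg c)))))) (Box (Neg (Neg (Box c)))),
      Iff (Box (Neg (Neg (Box c)))) (Box (Box c))]"]) (use a b c d in simp, auto simp: Dia_def)
qed

lemma ax5': "Imp (Neg (Box c)) (Box (Neg (Box c))) \<in> yalcin"
proof -
  have a: "Imp (Dia (Box c)) (Box c) \<in> yalcin" by (rule yalcin.Ax5)
  show ?thesis using a by (rule prop1) (auto simp: Dia_def)
qed

fun is_box :: "'p fm \<Rightarrow> bool" where
  "is_box (Box b) = True"
| "is_box _ = False"

lemma is_boxE: "is_box c \<Longrightarrow> \<exists>d. c = Box d" by (cases c) auto

fun unbox :: "'p fm \<Rightarrow> 'p fm" where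
  "unbox (Box b) = b"
| "unbox x = x"

definition sbox :: "'p fm list \<Rightarrow> 'p fm set \<Rightarrow> 'p fm set \<Rightarrow> bool" where
  "sbox cs G D \<longleftrightarrow> (\<forall>c. Box c \<in> set cs \<longrightarrow> (Box c \<in> D \<longleftrightarrow> Box c \<in> G))"

lemma clo_box: "\<forall>c\<in>set cs. set (sub c) \<subseteq> set cs \<Longrightarrow> Box c \<in> set cs \<Longrightarrow> c \<in> set cs"
  using sub_self[of c] by fastforce

lemma exist:
  assumes dist: "distinct cs" and clo: "\<forall>c\<in>set cs. set (sub c) \<subseteq> set cs"
    and G: "atom cs G" and bb: "Box b \<in> set cs" "Box b \<notin> G"
  shows "\<exists>D. atom cs D \<and> sbox cs G D \<and> (\<forall>c. Box c \<in> G \<longrightarrow> c \<in> D) \<and> b \<notin> D"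
proof -
  define S1 where "S1 = map unbox (filter (\<lambda>c. is_box c \<and> c \<in> G) cs)"
  define S2 where "S2 = map (\<lambda>c. if c \<in> G then c else Neg c) (filter is_box cs)"
  define \<chi> where "\<chi> = Conj (conjs (S1 @ S2)) (Neg b)"
  have Gcs: "G \<subseteq> set cs" using G by (simp add: atom_def)
  have "cons \<chi>"
  proof (rule ccontr)
    assume "\<not> cons \<chi>"
    then have "Neg \<chi> \<in> yalcin" by (simp add: cons_def)
    then have "Imp (conjs (S1 @ S2)) b \<in> yalcin" unfolding \<chi>_def by (rule prop1) auto
    then have 1: "Imp (conjs (map Box (S1 @ S2))) (Box b) \<in> yalcin" by (rule boxK_list)
    have 2: "Imp (lit cs G) (conjs (map Box (S1 @ S2))) \<in> yalcin"
    proof (rule conjs_intro, rule ballI)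
      fix x assume "x \<in> set (map Box (S1 @ S2))"
      then consider c where "c \<in> set cs" "is_box c" "c \<in> G" "x = Box (unbox c)"
        | c where "c \<in> set cs" "is_box c" "c \<in> G" "x = Box c"
        | c where "c \<in> set cs" "is_box c" "c \<notin> G" "x = Box (Neg c)"
        unfolding S1_def S2_def by (auto split: if_splits)
      then show "Imp (lit cs G) x \<in> yalcin"
      proof cases
        case 1
        obtain d where d: "c = Box d" using is_boxE 1(2) by blast
        then show ?thesis using 1 d by (intro taut) (auto simp: ptv_lit)
      next
        case 2
        obtain d where d: "c = Box d" using is_boxE 2(2) by blast
        have "Imp (lit cs G) (Box d) \<in> yalcin" using 2 d by (intro taut) (auto simp: ptv_lit)
        then show ?thesis using 2 d ax4'[of d] by (simp add: imp_trans)
      next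
        case 3
        obtain d where d: "c = Box d" using is_boxE 3(2) by blast
        have "Imp (lit cs G) (Neg (Box d)) \<in> yalcin" using 3 d by (intro taut) (auto simp: ptv_lit)
        then show ?thesis using 3 d ax5'[of d] by (simp add: imp_trans)
      qed
    qed
    have 3: "Imp (lit cs G) (Neg (Box b)) \<in> yalcin" using bb by (intro taut) (auto simp: ptv_lit)
    have "Neg (lit cs G) \<in> yalcin"
      by (rule prop3[OF 1 2 3]) auto
    then show False using G by (simp add: atom_def cons_def)
  qed
  then obtain D where D: "D \<subseteq> set cs" "cons (Conj \<chi> (lit cs D))" using ext[OF dist] by blast
  then have aD: "atom cs D" unfolding atom_def by (auto elim: cons_mono)
  obtain g where g: "ptv g \<chi>" "ptv g (lit cs D)" using cons_sat[OF D(2)] by auto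
  have gc: "\<And>c. c \<in> set cs \<Longrightarrow> ptv g c = (c \<in> D)" using g(2) by (simp add: ptv_lit)
  have "sbox cs G D" unfolding sbox_def
  proof (intro allI impI)
    fix c assume c: "Box c \<in> set cs"
    then have "(if Box c \<in> G then Box c else Neg (Box c)) \<in> set S2" unfolding S2_def by auto
    then have "ptv g (if Box c \<in> G then Box c else Neg (Box c))" using g(1) unfolding \<chi>_def by auto
    then show "(Box c \<in> D) = (Box c \<in> G)" using gc[OF c] by (auto split: if_splits)
  qed
  moreover have "\<forall>c. Box c \<in> G \<longrightarrow> c \<in> D"
  proof (intro allI impI)
    fix c assume c: "Box c \<in> G"
    then have "Box c \<in> set cs" using Gcs by auto
    then have ccs: "c \<in> set cs" using clo clo_box by blast
    have "c \<in> set S1" unfolding S1_def using c \<open>Box c \<in> set cs\<close> by (force simp: image_iff)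
    then have "ptv g c" using g(1) unfolding \<chi>_def by auto
    then show "c \<in> D" using gc[OF ccs] by simp
  qed
  moreover have "b \<notin> D"
  proof -
    have "b \<in> set cs" using bb clo clo_box by blast
    moreover have "\<not> ptv g b" using g(1) unfolding \<chi>_def by auto
    ultimately show ?thesis using gc by blast
  qed
  ultimately show ?thesis using aD by blast
qed




definition valof :: "'p fm set \<Rightarrow> 'p set" where
  "valof D = {p. Var p \<in> D}"

lemma truth:
  assumes dist: "distinct cs" and clo: "\<forall>c\<in>set cs. set (sub c) \<subseteq> set cs"
    and G: "atom cs G"
  defines "K \<equiv> {D. atom cs D \<and> sbox cs G D \<and> (\<forall>c. Box c \<in> G \<longrightarrow> c \<in> D)}"
  shows "set (sub \<psi>) \<subseteq> set cs \<Longrightarrow> cfree \<psi> \<Longrightarrow> atom cs D \<Longrightarrow> sbox cs G D \<Longrightarrow>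
     sat (\<lambda>p. {S. p \<in> S}) (valof D) (valof ` K) \<psi> = (\<psi> \<in> D)"
proof (induction \<psi> arbitrary: D)
  case (Var p)
  then show ?case by (simp add: valof_def)
next
  case (Neg a)
  obtain g where g: "\<forall>c\<in>set cs. ptv g c = (c \<in> D)" using atom_g[OF Neg.prems(3)] by blast
  have "Neg a \<in> set cs" "a \<in> set cs" using Neg.prems(1) sub_self[of a] by auto
  then have "ptv g (Neg a) = (Neg a \<in> D)" "ptv g a = (a \<in> D)" using g by blast+
  then have "(Neg a \<in> D) = (a \<notin> D)" by simp
  then show ?case using Neg by simp
next
  case (Conj a b)
  obtain g where g: "\<forall>c\<in>set cs. ptv g c = (c \<in> D)" using atom_g[OF Conj.prems(3)] by blast
  have "Conj a b \<in> set cs" "a \<in> set cs" "b \<in> set cs" using Conj.prems(1) sub_self[of a] sub_self[of b] by auto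
  then have "ptv g (Conj a b) = (Conj a b \<in> D)" "ptv g a = (a \<in> D)" "ptv g b = (b \<in> D)" using g by blast+
  then have "(Conj a b \<in> D) = (a \<in> D \<and> b \<in> D)" by simp
  then show ?case using Conj by simp
next
  case (Box b)
  have bcs: "Box b \<in> set cs" using Box.prems(1) by simp
  have IH: "\<And>D'. D' \<in> K \<Longrightarrow> sat (\<lambda>p. {S. p \<in> S}) (valof D') (valof ` K) b = (b \<in> D')"
    using Box.IH Box.prems(1,2) unfolding K_def by auto
  have "(\<forall>D'\<in>K. b \<in> D') = (Box b \<in> G)"
  proof
    assume A: "\<forall>D'\<in>K. b \<in> D'"
    show "Box b \<in> G"
    proof (rule ccontr)
      assume "Box b \<notin> G"
      then obtain D' where "atom cs D' \<and> sbox cs G D' \<and> (\<forall>c. Box c \<in> G \<longrightarrow> c \<in> D') \<and> b \<notin> D'"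
        using exist[OF dist clo G bcs] by blast
      then show False using A unfolding K_def by blast
    qed
  next
    assume "Box b \<in> G"
    then show "\<forall>D'\<in>K. b \<in> D'" unfolding K_def by blast
  qed
  moreover have "(Box b \<in> D) = (Box b \<in> G)" using Box.prems(4) bcs unfolding sbox_def by blast
  ultimately show ?case using IH by simp
next
  case (Cond a b)
  then show ?case by simp
qed

lemma completeness_cfree:
  fixes \<phi> :: "'p fm"
  assumes "cfree \<phi>" "valid_in TYPE('p set) \<phi>"
  shows "\<phi> \<in> yalcin"
proof (rule ccontr)
  assume nP: "\<phi> \<notin> yalcin"
  define cs where "cs = remdups (sub \<phi>)"
  have dist: "distinct cs" unfolding cs_def by simp
  have clo: "\<forall>c\<in>set cs. set (sub c) \<subseteq> set cs" unfolding cs_def using sub_trans by auto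
  have "cons (Neg \<phi>)"
  proof (rule ccontr)
    assume "\<not> cons (Neg \<phi>)"
    then have "Neg (Neg \<phi>) \<in> yalcin" by (simp add: cons_def)
    then have "\<phi> \<in> yalcin" by (rule prop1) simp
    then show False using nP by simp
  qed
  then obtain G where G: "G \<subseteq> set cs" "cons (Conj (Neg \<phi>) (lit cs G))" using ext[OF dist] by blast
  then have aG: "atom cs G" unfolding atom_def by (auto elim: cons_mono)
  obtain g where g: "\<not> ptv g \<phi>" "ptv g (lit cs G)" using cons_sat[OF G(2)] by auto
  have pcs: "\<phi> \<in> set cs" unfolding cs_def using sub_self by simp
  have "\<phi> \<notin> G" using g pcs by (auto simp: ptv_lit)
  define K where "K = {D. atom cs D \<and> sbox cs G D \<and> (\<forall>c. Box c \<in> G \<longrightarrow> c \<in> D)}"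
  have "sat (\<lambda>p. {S. p \<in> S}) (valof G) (valof ` K) \<phi> = (\<phi> \<in> G)"
    unfolding K_def
  proof (rule truth[OF dist clo aG])
    show "set (sub \<phi>) \<subseteq> set cs" unfolding cs_def by simp
    show "cfree \<phi>" by (rule assms(1))
    show "atom cs G" by (rule aG)
    show "sbox cs G G" unfolding sbox_def by blast
  qed
  then have "\<not> sat (\<lambda>p. {S. p \<in> S}) (valof G) (valof ` K) \<phi>" using \<open>\<phi> \<notin> G\<close> by simp
  moreover have "is_model (UNIV :: 'p set set) (\<lambda>p. {S. p \<in> S})" by (simp add: is_model_def)
  moreover have "valof ` K \<subseteq> UNIV" by simp
  ultimately show False using assms(2) unfolding valid_in_def
    by (meson UNIV_I)
qed

lemma completeness:
  fixes \<phi> :: "'p fm"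
  assumes "valid_in TYPE('p set) \<phi>"
  shows "\<phi> \<in> yalcin"
proof -
  obtain \<psi> where p: "cfree \<psi>" "Iff \<phi> \<psi> \<in> yalcin" using elim by blast
  have "valid_in TYPE('p set) \<psi>"
    unfolding valid_in_def
  proof (intro allI impI)
    fix W :: "'p set set" and V :: "'p \<Rightarrow> 'p set set" and w X
    assume A: "is_model W V \<and> w \<in> W \<and> X \<subseteq> W"
    then have "sat V w X (Iff \<phi> \<psi>)" using soundness[OF p(2), of W V w X] by simp
    moreover have "sat V w X \<phi>" using assms A unfolding valid_in_def by simp
    ultimately show "sat V w X \<psi>" by simp
  qed
  then have "\<psi> \<in> yalcin" by (rule completeness_cfree[OF p(1)])
  then show ?thesis using p(2) by (rule prop2) auto
qed

lemma sound_valid: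
  fixes \<phi> :: "'p fm"
  shows "\<phi> \<in> yalcin \<Longrightarrow> valid_in TYPE('w) \<phi>"
  unfolding valid_in_def
proof (intro allI impI)
  fix W :: "'w set" and V :: "'p \<Rightarrow> 'w set" and w X
  assume "\<phi> \<in> yalcin" "is_model W V \<and> w \<in> W \<and> X \<subseteq> W"
  then show "sat V w X \<phi>" using soundness[of \<phi> W V w X] by simp
qed

theorem theorem1:
  fixes \<phi> :: "'p fm" and \<sigma>s :: "'p fm list"
  shows "(\<phi> \<in> yalcin \<longrightarrow> valid_in TYPE('w) \<phi>)
       \<and> (valid_in TYPE('p set) \<phi> \<longleftrightarrow> \<phi> \<in> yalcin)
       \<and> (Imp (box_conj \<sigma>s) (Box \<phi>) \<in> yalcin \<longrightarrow> info_cons_in TYPE('w) (set \<sigma>s) \<phi>)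
       \<and> (info_cons_in TYPE('p set) (set \<sigma>s) \<phi> \<longleftrightarrow> Imp (box_conj \<sigma>s) (Box \<phi>) \<in> yalcin)"
proof (intro conjI)
  show "\<phi> \<in> yalcin \<longrightarrow> valid_in TYPE('w) \<phi>" by (intro impI sound_valid)
  show "valid_in TYPE('p set) \<phi> \<longleftrightarrow> \<phi> \<in> yalcin"
    using sound_valid[of \<phi>] completeness[of \<phi>] by (intro iffI) simp_all
  show "Imp (box_conj \<sigma>s) (Box \<phi>) \<in> yalcin \<longrightarrow> info_cons_in TYPE('w) (set \<sigma>s) \<phi>"
    unfolding info_valid by (intro impI sound_valid)
  show "info_cons_in TYPE('p set) (set \<sigma>s) \<phi> \<longleftrightarrow> Imp (box_conj \<sigma>s) (Box \<phi>) \<in> yalcin"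
    unfolding info_valid
    using completeness[of "Imp (box_conj \<sigma>s) (Box \<phi>)"] by (intro iffI sound_valid) simp_all
qed


end
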